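(* For $k\ge1$, let $\mathcal B_k$ be the set of $k\times k$ symmetric matrices over $\mathbb F_2$ of rank $k-1$ with every row sum $0$. Then $\#\mathcal B_k=u_k\cdot2^{\binom k2}$, where $u_k=\prod_{i=1}^{\lfloor k/2\rfloor}(1-2^{1-2i})$. *)

theory Defs
  imports Complex_Main "HOL-Library.Z2" "Jordan_Normal_Form.DL_Rank"
begin

definition B_set :: "nat \<Rightarrow> bit mat set" where
  "B_set k = {A \<in> carrier_mat k k.
      transpose_mat A = A \<and>
      vec_space.rank k A = k - 1 \<and>
      (\<forall>i<k. (\<Sum>j<k. A $$ (i, j)) = 0)}"

definition u :: "nat \<Rightarrow> real" where
  "u k = (\<Prod>i\<in>{1..k div 2}. 1 - 2 powi (1 - 2 * int i))"

end

theory Submission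
  imports Defs "Jordan_Normal_Form.DL_Rank_Submatrix"
begin


declare add_bit_eq_xor[simp del] mult_bit_eq_and[simp del]

lemma bit_UNIV: "(UNIV::bit set) = {0,1}" by (auto intro: bit_not_zero_iff)
lemma bit_add_self[simp]: "(x::bit) + x = 0" by (cases x) simp_all
lemma bit_cases2: "(x::bit) = 0 \<or> x = 1" by (cases x) simp_all
lemma bit_sq[simp]: "(x::bit) * x = x" by (cases x) simp_all
lemma bit_add_eq_iff: "((x::bit) + y = 0) = (x = y)" by (cases x; cases y) simp_all

definition E :: "nat set \<Rightarrow> (nat \<Rightarrow> bit) set" where
  "E J = {b. \<forall>x. x \<notin> J \<longrightarrow> b x = 0}"
definition symm :: "nat set \<Rightarrow> (nat \<Rightarrow> nat \<Rightarrow> bit) set" where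
  "symm J = {C. (\<forall>x y. C x y = C y x) \<and> (\<forall>x y. x \<notin> J \<longrightarrow> C x y = 0)}"
definition mv :: "(nat \<Rightarrow> nat \<Rightarrow> bit) \<Rightarrow> nat set \<Rightarrow> (nat \<Rightarrow> bit) \<Rightarrow> nat \<Rightarrow> bit" where
  "mv C J v x = (\<Sum>j\<in>J. C x j * v j)"
definition nsg :: "nat set \<Rightarrow> (nat \<Rightarrow> nat \<Rightarrow> bit) \<Rightarrow> bool" where
  "nsg J C = (\<forall>v. (\<forall>x\<in>J. mv C J v x = 0) \<longrightarrow> (\<forall>x\<in>J. v x = 0))"
definition SS :: "nat set \<Rightarrow> (nat \<Rightarrow> nat \<Rightarrow> bit) set" where
  "SS J = {C \<in> symm J. nsg J C}"
definition glue :: "nat \<Rightarrow> bit \<Rightarrow> (nat \<Rightarrow> bit) \<Rightarrow> (nat \<Rightarrow> nat \<Rightarrow> bit) \<Rightarrow> nat \<Rightarrow> nat \<Rightarrow> bit" where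
  "glue i a b C x y = (if x = i then (if y = i then a else b y) else if y = i then b x else C x y)"

lemma finite_E: "finite J \<Longrightarrow> finite (E J)"
proof -
  assume "finite J"
  have "E J = {f. \<forall>x. (x \<in> J \<longrightarrow> f x \<in> (UNIV::bit set)) \<and> (x \<notin> J \<longrightarrow> f x = 0)}"
    unfolding E_def by auto
  then show ?thesis using finite_set_of_finite_funs[OF \<open>finite J\<close>, of "UNIV::bit set" 0] by (simp add: bit_UNIV)
qed

lemma finite_symm: "finite J \<Longrightarrow> finite (symm J)"
proof -
  assume f: "finite J"
  have "symm J \<subseteq> {f. \<forall>x. (x \<in> J \<longrightarrow> f x \<in> E J) \<and> (x \<notin> J \<longrightarrow> f x = (\<lambda>_. 0))}"
  proof
    fix C assume "C \<in> symm J"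
    then have s: "\<And>x y. C x y = C y x" and z: "\<And>x y. x \<notin> J \<Longrightarrow> C x y = 0" unfolding symm_def by auto
    have "\<And>x. x \<in> J \<longrightarrow> C x \<in> E J" unfolding E_def
    proof (intro impI CollectI allI)
      fix x y assume "y \<notin> J" then show "C x y = 0" using s[of x y] z[of y x] by simp
    qed
    moreover have "\<And>x. x \<notin> J \<longrightarrow> C x = (\<lambda>_. 0)" using z by auto
    ultimately show "C \<in> {f. \<forall>x. (x \<in> J \<longrightarrow> f x \<in> E J) \<and> (x \<notin> J \<longrightarrow> f x = (\<lambda>_. 0))}" by blast
  qed
  then show ?thesis using finite_set_of_finite_funs[OF f finite_E[OF f], of "\<lambda>_. 0"] finite_subset by blast
qed

lemma card_E: "finite J \<Longrightarrow> card (E J) = 2 ^ card J"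
proof (induction J rule: finite_induct)
  case empty
  have "E {} = {\<lambda>_. 0}" unfolding E_def by auto
  then show ?case by simp
next
  case (insert i J)
  have eq: "E (insert i J) = (\<lambda>(a,b). b(i := a)) ` (UNIV \<times> E J)"
  proof
    show "E (insert i J) \<subseteq> (\<lambda>(a,b). b(i := a)) ` (UNIV \<times> E J)"
    proof
      fix f assume "f \<in> E (insert i J)"
      then have "f = (\<lambda>(a,b). b(i := a)) (f i, f(i := 0))" "(f i, f(i:=0)) \<in> UNIV \<times> E J"
        unfolding E_def by auto
      then show "f \<in> (\<lambda>(a,b). b(i := a)) ` (UNIV \<times> E J)" by blast
    qed
  qed (auto simp: E_def)
  have inj: "inj_on (\<lambda>(a,b). b(i := a)) (UNIV \<times> E J)"
  proof (rule inj_onI, clarify)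
    fix a b a' b' assume "b \<in> E J" "b' \<in> E J"
    then have bi: "b i = 0" "b' i = 0" using insert(2) unfolding E_def by auto
    assume h: "b(i := a) = b'(i := a')"
    have "a = a'" using fun_cong[OF h, of i] by simp
    moreover have "b = b'"
    proof
      fix y show "b y = b' y" using fun_cong[OF h, of y] bi by (cases "y = i") auto
    qed
    ultimately show "a = a' \<and> b = b'" by simp
  qed
  have "card (E (insert i J)) = card ((UNIV::bit set) \<times> E J)" using eq card_image[OF inj] by simp
  also have "\<dots> = 2 * 2 ^ card J" using insert by (simp add: card_cartesian_product bit_UNIV)
  finally show ?case using insert by simp
qed

lemma glue_ii[simp]: "glue i a b C i i = a" by (simp add: glue_def)
lemma glue_iy[simp]: "y \<noteq> i \<Longrightarrow> glue i a b C i y = b y" by (simp add: glue_def)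
lemma glue_xi[simp]: "x \<noteq> i \<Longrightarrow> glue i a b C x i = b x" by (simp add: glue_def)
lemma glue_xy[simp]: "x \<noteq> i \<Longrightarrow> y \<noteq> i \<Longrightarrow> glue i a b C x y = C x y" by (simp add: glue_def)

lemma glue_symm: "i \<notin> J \<Longrightarrow> b \<in> E J \<Longrightarrow> C \<in> symm J \<Longrightarrow> glue i a b C \<in> symm (insert i J)"
proof -
  assume i: "i \<notin> J" and b: "b \<in> E J" and C: "C \<in> symm J"
  have s: "\<And>x y. C x y = C y x" and z: "\<And>x y. x \<notin> J \<Longrightarrow> C x y = 0" and bz: "\<And>x. x \<notin> J \<Longrightarrow> b x = 0"
    using b C unfolding symm_def E_def by blast+
  show ?thesis unfolding symm_def
  proof (intro CollectI conjI allI impI)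
    fix x y show "glue i a b C x y = glue i a b C y x"
      unfolding glue_def using s[of x y] by simp
  next
    fix x y assume "x \<notin> insert i J"
    then show "glue i a b C x y = 0" unfolding glue_def using z[of x y] bz[of x] by auto
  qed
qed

lemma glue_decomp:
  assumes "A \<in> symm (insert i J)" "i \<notin> J"
  shows "A = glue i (A i i) (\<lambda>y. if y \<in> J then A i y else 0) (\<lambda>x y. if x \<in> J \<and> y \<in> J then A x y else 0)"
proof (intro ext)
  fix x y
  have s: "A x y = A y x" and z: "\<And>x y. x \<notin> insert i J \<Longrightarrow> A x y = 0" using assms(1) unfolding symm_def by auto
  show "A x y = glue i (A i i) (\<lambda>y. if y \<in> J then A i y else 0) (\<lambda>x y. if x \<in> J \<and> y \<in> J then A x y else 0) x y"
    unfolding glue_def using s z[of x y] z[of y x] by auto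
qed

lemma glue_parts: "i \<notin> J \<Longrightarrow> A \<in> symm (insert i J) \<Longrightarrow>
   (\<lambda>y. if y \<in> J then A i y else 0) \<in> E J \<and> (\<lambda>x y. if x \<in> J \<and> y \<in> J then A x y else 0) \<in> symm J"
proof -
  assume "A \<in> symm (insert i J)"
  then have s: "\<And>x y. A x y = A y x" unfolding symm_def by blast
  show ?thesis unfolding symm_def E_def
  proof (intro conjI CollectI allI impI)
    fix x y show "(if x \<in> J \<and> y \<in> J then A x y else 0) = (if y \<in> J \<and> x \<in> J then A y x else 0)"
      using s[of x y] by auto
  qed auto
qed

lemma glue_inj:
  assumes "i \<notin> J" "b \<in> E J" "C \<in> symm J" "b' \<in> E J" "C' \<in> symm J"
    "glue i a b C = glue i a' b' C'"
  shows "a = a' \<and> b = b' \<and> C = C'"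
proof (intro conjI)
  show "a = a'" using fun_cong[OF fun_cong[OF assms(6)], of i i] by (simp add: glue_def)
  show "b = b'"
  proof
    fix y show "b y = b' y"
      using fun_cong[OF fun_cong[OF assms(6)], of i y] assms(1,2,4) unfolding E_def glue_def
      by (cases "y = i") auto
  qed
  show "C = C'"
  proof (intro ext)
    fix x y
    have h: "glue i a b C x y = glue i a' b' C' x y" using assms(6) by simp
    show "C x y = C' x y"
    proof (cases "x = i \<or> y = i")
      case True
      have s1: "C x y = C y x" "C' x y = C' y x" and z: "\<And>x y. x \<notin> J \<Longrightarrow> C x y = 0" "\<And>x y. x \<notin> J \<Longrightarrow> C' x y = 0"
        using assms(3,5) unfolding symm_def by blast+
      show ?thesis using True assms(1) s1 z by metis
    next
      case False
      then show ?thesis using h unfolding glue_def by simp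
    qed
  qed
qed

lemma mv_glue_i: "finite J \<Longrightarrow> i \<notin> J \<Longrightarrow>
   mv (glue i a b C) (insert i J) v i = a * v i + (\<Sum>j\<in>J. b j * v j)"
proof -
  assume f: "finite J" and i: "i \<notin> J"
  have "mv (glue i a b C) (insert i J) v i = glue i a b C i i * v i + (\<Sum>j\<in>J. glue i a b C i j * v j)"
    unfolding mv_def using f i by (simp add: sum.insert)
  also have "(\<Sum>j\<in>J. glue i a b C i j * v j) = (\<Sum>j\<in>J. b j * v j)"
    using i by (intro sum.cong refl) (metis glue_iy)
  finally show ?thesis by simp
qed

lemma mv_glue_x: "finite J \<Longrightarrow> i \<notin> J \<Longrightarrow> x \<in> J \<Longrightarrow>
   mv (glue i a b C) (insert i J) v x = b x * v i + mv C J v x"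
proof -
  assume f: "finite J" and i: "i \<notin> J" and x: "x \<in> J"
  have xi: "x \<noteq> i" using i x by auto
  have "mv (glue i a b C) (insert i J) v x = glue i a b C x i * v i + (\<Sum>j\<in>J. glue i a b C x j * v j)"
    unfolding mv_def using f i by (simp add: sum.insert)
  also have "(\<Sum>j\<in>J. glue i a b C x j * v j) = mv C J v x"
    unfolding mv_def using i x by (intro sum.cong refl) (metis glue_xy)
  also have "glue i a b C x i = b x" using xi by simp
  finally show ?thesis .
qed


lemma mv_addouter: "mv (\<lambda>x y. C x y + b x * e y) J w x = mv C J w x + b x * (\<Sum>j\<in>J. e j * w j)"
  unfolding mv_def by (simp add: sum.distrib sum_distrib_left algebra_simps)

lemma mv_cong: "(\<And>y. y \<in> J \<Longrightarrow> w y = w' y) \<Longrightarrow> mv C J w x = mv C J w' x"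
  unfolding mv_def by (intro sum.cong) auto

lemma nsg_glue1:
  assumes f: "finite J" and i: "i \<notin> J" and b: "b \<in> E J" and C: "C \<in> symm J"
  shows "nsg (insert i J) (glue i 1 b C) = nsg J (\<lambda>x y. C x y + b x * b y)"
proof
  assume N: "nsg (insert i J) (glue i 1 b C)"
  show "nsg J (\<lambda>x y. C x y + b x * b y)"
    unfolding nsg_def
  proof (intro allI impI)
    fix w assume W: "\<forall>x\<in>J. mv (\<lambda>x y. C x y + b x * b y) J w x = 0"
    define s where "s = (\<Sum>j\<in>J. b j * w j)"
    define v where "v = w(i := s)"
    have vw: "\<And>y. y \<in> J \<Longrightarrow> v y = w y" using i unfolding v_def by auto
    have sv: "(\<Sum>j\<in>J. b j * v j) = s" unfolding s_def using vw by (intro sum.cong) auto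
    have "\<forall>x\<in>insert i J. mv (glue i 1 b C) (insert i J) v x = 0"
    proof
      fix x assume "x \<in> insert i J"
      then consider "x = i" | "x \<in> J" by auto
      then show "mv (glue i 1 b C) (insert i J) v x = 0"
      proof cases
        case 1
        then show ?thesis using mv_glue_i[OF f i] sv by (simp add: v_def)
      next
        case 2
        have "mv (glue i 1 b C) (insert i J) v x = b x * s + mv C J w x"
          using mv_glue_x[OF f i 2] mv_cong[of J v w C x] vw i 2 by (auto simp: v_def)
        also have "\<dots> = mv (\<lambda>x y. C x y + b x * b y) J w x" unfolding mv_addouter s_def by (simp add: add.commute)
        finally show ?thesis using W 2 by simp
      qed
    qed
    then have "\<forall>x\<in>insert i J. v x = 0" using N unfolding nsg_def by blast
    then show "\<forall>x\<in>J. w x = 0" using vw by auto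
  qed
next
  assume N: "nsg J (\<lambda>x y. C x y + b x * b y)"
  show "nsg (insert i J) (glue i 1 b C)"
    unfolding nsg_def
  proof (intro allI impI)
    fix v assume V: "\<forall>x\<in>insert i J. mv (glue i 1 b C) (insert i J) v x = 0"
    define s where "s = (\<Sum>j\<in>J. b j * v j)"
    have vi: "v i = s" using V mv_glue_i[OF f i, of 1 b C v] unfolding s_def by (simp add: bit_add_eq_iff)
    have "\<forall>x\<in>J. mv (\<lambda>x y. C x y + b x * b y) J v x = 0"
    proof
      fix x assume x: "x \<in> J"
      have "mv (\<lambda>x y. C x y + b x * b y) J v x = b x * v i + mv C J v x"
        unfolding mv_addouter vi s_def by (simp add: add.commute)
      also have "\<dots> = 0" using V mv_glue_x[OF f i x, of 1 b C v] x by simp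
      finally show "mv (\<lambda>x y. C x y + b x * b y) J v x = 0" .
    qed
    then have vJ: "\<forall>x\<in>J. v x = 0" using N unfolding nsg_def by blast
    then have "s = 0" unfolding s_def by simp
    then show "\<forall>x\<in>insert i J. v x = 0" using vi vJ by simp
  qed
qed

lemma nsg_glue0_zero:
  assumes f: "finite J" and i: "i \<notin> J" and b: "\<And>x. b x = 0"
  shows "\<not> nsg (insert i J) (glue i 0 b C)"
proof
  assume N: "nsg (insert i J) (glue i 0 b C)"
  define v :: "nat \<Rightarrow> bit" where "v = (\<lambda>x. if x = i then 1 else 0)"
  have "\<forall>x\<in>insert i J. mv (glue i 0 b C) (insert i J) v x = 0"
  proof
    fix x assume "x \<in> insert i J"
    then consider "x = i" | "x \<in> J" by auto
    then show "mv (glue i 0 b C) (insert i J) v x = 0"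
    proof cases
      case 1 then show ?thesis using mv_glue_i[OF f i] b by simp
    next
      case 2
      have "mv C J v x = 0" unfolding mv_def v_def using i by (intro sum.neutral) auto
      then show ?thesis using mv_glue_x[OF f i 2] b by simp
    qed
  qed
  then have "v i = 0" using N unfolding nsg_def by blast
  then show False unfolding v_def by simp
qed


definition corr :: "bit \<Rightarrow> (nat \<Rightarrow> bit) \<Rightarrow> (nat \<Rightarrow> bit) \<Rightarrow> nat \<Rightarrow> nat \<Rightarrow> bit" where
  "corr c b' d x y = c * b' x * b' y + b' x * d y + d x * b' y"

lemma mv_corr: "mv (\<lambda>x y. D x y + corr c b' d x y) K w x =
   mv D K w x + c * b' x * (\<Sum>j\<in>K. b' j * w j) + b' x * (\<Sum>j\<in>K. d j * w j) + d x * (\<Sum>j\<in>K. b' j * w j)"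
  unfolding mv_def corr_def by (simp add: sum.distrib sum_distrib_left algebra_simps)

lemma nsg_glue0:
  assumes f: "finite K" and i: "i \<notin> insert j K" and j: "j \<notin> K"
    and b': "b' \<in> E K" and d: "d \<in> E K"
  shows "nsg (insert i (insert j K)) (glue i 0 (b'(j := 1)) (glue j c d D)) =
         nsg K (\<lambda>x y. D x y + corr c b' d x y)"
proof -
  let ?I = "insert i (insert j K)"
  let ?G = "glue i 0 (b'(j := 1)) (glue j c d D)"
  let ?M = "\<lambda>x y. D x y + corr c b' d x y"
  have fJ: "finite (insert j K)" using f by simp
  have ij: "i \<noteq> j" using i by auto
  define T where "T = (\<lambda>v. \<Sum>y\<in>K. b' y * v y)"
  define U where "U = (\<lambda>v. \<Sum>y\<in>K. d y * v y)"
  have sumb: "(\<Sum>y\<in>insert j K. (b'(j := 1)) y * v y) = v j + T v" for v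
  proof -
    have "(\<Sum>y\<in>insert j K. (b'(j := 1)) y * v y) = v j + (\<Sum>y\<in>K. (b'(j := 1)) y * v y)"
      using f j by (simp add: sum.insert)
    also have "(\<Sum>y\<in>K. (b'(j := 1)) y * v y) = T v" unfolding T_def using j by (intro sum.cong) auto
    finally show ?thesis .
  qed
  have row_i: "mv ?G ?I v i = v j + T v" for v
    using mv_glue_i[OF fJ i] sumb by simp
  have row_j: "mv ?G ?I v j = v i + c * v j + U v" for v
    using mv_glue_x[OF fJ i, of j] mv_glue_i[OF f j, of c d D v] unfolding U_def by (simp add: add.assoc)
  have row_x: "x \<in> K \<Longrightarrow> mv ?G ?I v x = b' x * v i + d x * v j + mv D K v x" for v x
  proof -
    assume x: "x \<in> K"
    then have xj: "x \<noteq> j" using j by auto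
    have "mv ?G ?I v x = (b'(j := 1)) x * v i + mv (glue j c d D) (insert j K) v x"
      using mv_glue_x[OF fJ i] x by simp
    also have "mv (glue j c d D) (insert j K) v x = d x * v j + mv D K v x" using mv_glue_x[OF f j x] .
    finally have "mv ?G ?I v x = (b'(j := 1)) x * v i + (d x * v j + mv D K v x)" .
    then show ?thesis by (simp only: fun_upd_other[OF xj] add.assoc)
  qed
  have rowM: "mv ?M K w x = mv D K w x + c * b' x * T w + b' x * U w + d x * T w" for w x
    unfolding mv_corr T_def U_def ..
  show ?thesis
  proof
    assume N: "nsg ?I ?G"
    show "nsg K ?M" unfolding nsg_def
    proof (intro allI impI)
      fix w assume W: "\<forall>x\<in>K. mv ?M K w x = 0"
      define v where "v = w(j := T w, i := c * T w + U w)"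
      have vw: "\<And>y. y \<in> K \<Longrightarrow> v y = w y" using i j unfolding v_def by auto
      have Tv: "T v = T w" unfolding T_def using vw by (intro sum.cong) auto
      have Uv: "U v = U w" unfolding U_def using vw by (intro sum.cong) auto
      have vj: "v j = T w" and vi: "v i = c * T w + U w" unfolding v_def using ij by auto
      have "\<forall>x\<in>?I. mv ?G ?I v x = 0"
      proof
        fix x assume "x \<in> ?I"
        then consider "x = i" | "x = j" | "x \<in> K" by auto
        then show "mv ?G ?I v x = 0"
        proof cases
          case 1 then show ?thesis using row_i Tv vj by simp
        next
          case 2 then show ?thesis using row_j[of v] Uv vj vi by (simp add: algebra_simps)
        next
          case 3
          have "mv ?G ?I v x = b' x * v i + d x * v j + mv D K w x"
            using row_x[OF 3] mv_cong[of K v w D x] vw by simp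
          also have "\<dots> = mv ?M K w x" unfolding rowM vi vj by (simp add: algebra_simps)
          finally show ?thesis using W 3 by simp
        qed
      qed
      then have "\<forall>x\<in>?I. v x = 0" using N unfolding nsg_def by blast
      then show "\<forall>x\<in>K. w x = 0" using vw by auto
    qed
  next
    assume N: "nsg K ?M"
    show "nsg ?I ?G" unfolding nsg_def
    proof (intro allI impI)
      fix v assume V: "\<forall>x\<in>?I. mv ?G ?I v x = 0"
      have vj: "v j = T v" using V row_i[of v] by (simp add: bit_add_eq_iff)
      have vi: "v i = c * v j + U v" using V row_j[of v] ij by (simp add: bit_add_eq_iff add.assoc)
      have "\<forall>x\<in>K. mv ?M K v x = 0"
      proof
        fix x assume x: "x \<in> K"
        have "mv ?M K v x = b' x * v i + d x * v j + mv D K v x"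
          unfolding rowM vi vj by (simp add: algebra_simps)
        also have "\<dots> = 0" using V row_x[OF x, of v] x by simp
        finally show "mv ?M K v x = 0" .
      qed
      then have vK: "\<forall>x\<in>K. v x = 0" using N unfolding nsg_def by blast
      then have "T v = 0" "U v = 0" unfolding T_def U_def by simp_all
      then show "\<forall>x\<in>?I. v x = 0" using vi vj vK by simp
    qed
  qed
qed


lemma symm_corr:
  assumes "b' \<in> E K" "d \<in> E K" "D \<in> symm K"
  shows "(\<lambda>x y. D x y + corr c b' d x y) \<in> symm K"
proof -
  have s: "\<And>x y. D x y = D y x" and z: "\<And>x y. x \<notin> K \<Longrightarrow> D x y = 0"
    and zb: "\<And>x. x \<notin> K \<Longrightarrow> b' x = 0" and zd: "\<And>x. x \<notin> K \<Longrightarrow> d x = 0"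
    using assms unfolding symm_def E_def by blast+
  show ?thesis unfolding symm_def
  proof (intro CollectI conjI allI impI)
    fix x y show "D x y + corr c b' d x y = D y x + corr c b' d y x"
      unfolding corr_def using s[of x y] by (simp add: algebra_simps)
  next
    fix x y assume "x \<notin> K" then show "D x y + corr c b' d x y = 0"
      unfolding corr_def using z[of x y] zb[of x] zd[of x] by simp
  qed
qed

lemma symm_outer:
  assumes "b \<in> E J" "C \<in> symm J"
  shows "(\<lambda>x y. C x y + b x * b y) \<in> symm J"
proof -
  have s: "\<And>x y. C x y = C y x" and z: "\<And>x y. x \<notin> J \<Longrightarrow> C x y = 0"
    and zb: "\<And>x. x \<notin> J \<Longrightarrow> b x = 0"
    using assms unfolding symm_def E_def by blast+
  show ?thesis unfolding symm_def
  proof (intro CollectI conjI allI impI)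
    fix x y show "C x y + b x * b y = C y x + b y * b x"
      using s[of x y] by (simp add: algebra_simps)
  next
    fix x y assume "x \<notin> J" then show "C x y + b x * b y = 0"
      using z[of x y] zb[of x] by simp
  qed
qed

lemma add_twice: "(\<lambda>x y. (C x y + (e x y::bit)) + e x y) = C"
  by (simp add: add.assoc)

lemma finite_SS: "finite J \<Longrightarrow> finite (SS J)"
  unfolding SS_def using finite_symm by simp

lemma count1:
  assumes f: "finite J" and i: "i \<notin> J" and b: "b \<in> E J"
  shows "card {C \<in> symm J. nsg (insert i J) (glue i 1 b C)} = card (SS J)"
proof -
  let ?h = "\<lambda>C x y. C x y + b x * b y"
  have eq: "{C \<in> symm J. nsg (insert i J) (glue i 1 b C)} = ?h ` SS J"
  proof
    show "{C \<in> symm J. nsg (insert i J) (glue i 1 b C)} \<subseteq> ?h ` SS J"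
    proof
      fix C assume C: "C \<in> {C \<in> symm J. nsg (insert i J) (glue i 1 b C)}"
      define C' where "C' = ?h C"
      have "C' \<in> SS J" unfolding SS_def C'_def using C nsg_glue1[OF f i b] symm_outer[OF b] by auto
      moreover have "C = ?h C'" unfolding C'_def using add_twice[of C "\<lambda>x y. b x * b y"] by simp
      ultimately show "C \<in> ?h ` SS J" using image_eqI[where f="?h" and x=C'] by blast
    qed
  next
    show "?h ` SS J \<subseteq> {C \<in> symm J. nsg (insert i J) (glue i 1 b C)}"
    proof
      fix C assume "C \<in> ?h ` SS J"
      then obtain C' where C': "C' \<in> SS J" "C = ?h C'" by blast
      have "?h C = C'" using C'(2) add_twice[of C' "\<lambda>x y. b x * b y"] by simp
      then show "C \<in> {C \<in> symm J. nsg (insert i J) (glue i 1 b C)}"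
        using C' nsg_glue1[OF f i b, of C] symm_outer[OF b] unfolding SS_def by auto
    qed
  qed
  have inj: "inj_on ?h (SS J)"
  proof (rule inj_onI)
    fix C C' assume h: "?h C = ?h C'"
    show "C = C'"
    proof (intro ext)
      fix x y
      have "C x y + b x * b y = C' x y + b x * b y" using fun_cong[OF fun_cong[OF h, of x], of y] by simp
      then show "C x y = C' x y" by simp
    qed
  qed
  show ?thesis unfolding eq using card_image[OF inj] .
qed

lemma count0:
  assumes f: "finite K" and i: "i \<notin> insert j K" and j: "j \<notin> K" and b': "b' \<in> E K"
  shows "card {C \<in> symm (insert j K). nsg (insert i (insert j K)) (glue i 0 (b'(j := 1)) C)}
     = 2 * 2 ^ card K * card (SS K)"
proof -
  let ?h = "\<lambda>(c, d, D). glue j c d (\<lambda>x y. D x y + corr c b' d x y)"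
  let ?S = "{C \<in> symm (insert j K). nsg (insert i (insert j K)) (glue i 0 (b'(j := 1)) C)}"
  have eq: "?S = ?h ` ((UNIV::bit set) \<times> E K \<times> SS K)"
  proof
    show "?S \<subseteq> ?h ` ((UNIV::bit set) \<times> E K \<times> SS K)"
    proof
      fix C assume C: "C \<in> ?S"
      define c where "c = C j j"
      define d where "d = (\<lambda>y. if y \<in> K then C j y else 0)"
      define C0 where "C0 = (\<lambda>x y. if x \<in> K \<and> y \<in> K then C x y else 0)"
      have dec: "C = glue j c d C0" unfolding c_def d_def C0_def using glue_decomp[of C j K] C j by auto
      have parts: "d \<in> E K" "C0 \<in> symm K" unfolding d_def C0_def using glue_parts[of j K C] C j by auto
      define D where "D = (\<lambda>x y. C0 x y + corr c b' d x y)"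
      have DC: "(\<lambda>x y. D x y + corr c b' d x y) = C0" unfolding D_def using add_twice by simp
      have "nsg K D" using C nsg_glue0[OF f i j b' parts(1), of c C0] unfolding dec D_def by simp
      moreover have "D \<in> symm K" unfolding D_def using symm_corr[OF b' parts] .
      ultimately have "(c, d, D) \<in> (UNIV::bit set) \<times> E K \<times> SS K" using parts unfolding SS_def by auto
      moreover have "C = ?h (c, d, D)" using dec DC by simp
      ultimately show "C \<in> ?h ` ((UNIV::bit set) \<times> E K \<times> SS K)" by blast
    qed
  next
    show "?h ` ((UNIV::bit set) \<times> E K \<times> SS K) \<subseteq> ?S"
    proof
      fix C assume "C \<in> ?h ` ((UNIV::bit set) \<times> E K \<times> SS K)"
      then obtain c d D where cdD: "d \<in> E K" "D \<in> SS K" "C = glue j c d (\<lambda>x y. D x y + corr c b' d x y)" by auto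
      have Ds: "D \<in> symm K" "nsg K D" using cdD(2) unfolding SS_def by auto
      have sy: "(\<lambda>x y. D x y + corr c b' d x y) \<in> symm K" using symm_corr[OF b' cdD(1) Ds(1)] .
      have "C \<in> symm (insert j K)" using glue_symm[OF j cdD(1) sy] cdD(3) by simp
      moreover have "nsg (insert i (insert j K)) (glue i 0 (b'(j := 1)) C)"
        using nsg_glue0[OF f i j b' cdD(1), of c "\<lambda>x y. D x y + corr c b' d x y"] add_twice Ds(2) cdD(3) by simp
      ultimately show "C \<in> ?S" by simp
    qed
  qed
  have inj: "inj_on ?h ((UNIV::bit set) \<times> E K \<times> SS K)"
  proof (rule inj_onI)
    fix x y assume x: "x \<in> (UNIV::bit set) \<times> E K \<times> SS K" and y: "y \<in> (UNIV::bit set) \<times> E K \<times> SS K" and hh: "?h x = ?h y"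
    obtain c d D where xe: "x = (c, d, D)" by (cases x) auto
    obtain c' d' D' where ye: "y = (c', d', D')" by (cases y) auto
    have A: "d \<in> E K" "D \<in> SS K" "d' \<in> E K" "D' \<in> SS K" using x y xe ye by auto
    have h: "glue j c d (\<lambda>x y. D x y + corr c b' d x y) = glue j c' d' (\<lambda>x y. D' x y + corr c' b' d' x y)"
      using hh xe ye by simp
    have "D \<in> symm K" "D' \<in> symm K" using A unfolding SS_def by auto
    then have "c = c' \<and> d = d' \<and> (\<lambda>x y. D x y + corr c b' d x y) = (\<lambda>x y. D' x y + corr c' b' d' x y)"
      using glue_inj[OF j A(1) symm_corr[OF b' A(1)] A(3) symm_corr[OF b' A(3)] h] by blast
    moreover from this have "D = D'"
      using add_twice[of D "corr c b' d"] add_twice[of D' "corr c b' d"] by metis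
    ultimately show "x = y" using xe ye by simp
  qed
  have "card ?S = card ((UNIV::bit set) \<times> E K \<times> SS K)" unfolding eq using card_image[OF inj] .
  also have "\<dots> = 2 * 2 ^ card K * card (SS K)"
    using f by (simp add: card_cartesian_product bit_UNIV card_E)
  finally show ?thesis .
qed


lemma card_SS_insert:
  assumes f: "finite J" and i: "i \<notin> J"
  shows "card (SS (insert i J)) = (\<Sum>a\<in>UNIV. \<Sum>b\<in>E J. card {C \<in> symm J. nsg (insert i J) (glue i a b C)})"
proof -
  let ?F = "\<lambda>a b. {C \<in> symm J. nsg (insert i J) (glue i a b C)}"
  let ?D = "SIGMA a:(UNIV::bit set). SIGMA b:E J. ?F a b"
  let ?h = "\<lambda>(a, b, C). glue i a b C"
  have eq: "SS (insert i J) = ?h ` ?D"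
  proof
    show "SS (insert i J) \<subseteq> ?h ` ?D"
    proof
      fix A assume A: "A \<in> SS (insert i J)"
      define b where "b = (\<lambda>y. if y \<in> J then A i y else 0)"
      define C where "C = (\<lambda>x y. if x \<in> J \<and> y \<in> J then A x y else 0)"
      have As: "A \<in> symm (insert i J)" "nsg (insert i J) A" using A unfolding SS_def by auto
      have dec: "A = glue i (A i i) b C" unfolding b_def C_def using glue_decomp[OF As(1) i] .
      have parts: "b \<in> E J" "C \<in> symm J" unfolding b_def C_def using glue_parts[OF i As(1)] by auto
      have "(A i i, b, C) \<in> ?D" using parts As(2) dec by auto
      moreover have "A = ?h (A i i, b, C)" using dec by simp
      ultimately show "A \<in> ?h ` ?D" by (rule rev_image_eqI)
    qed
  next
    show "?h ` ?D \<subseteq> SS (insert i J)"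
      using glue_symm[OF i] unfolding SS_def by auto
  qed
  have inj: "inj_on ?h ?D"
  proof (rule inj_onI)
    fix x y assume x: "x \<in> ?D" and y: "y \<in> ?D" and hh: "?h x = ?h y"
    obtain a b C where xe: "x = (a, b, C)" by (cases x) auto
    obtain a' b' C' where ye: "y = (a', b', C')" by (cases y) auto
    have A: "b \<in> E J" "C \<in> symm J" "b' \<in> E J" "C' \<in> symm J" using x y xe ye by auto
    have "glue i a b C = glue i a' b' C'" using hh xe ye by simp
    then show "x = y" using glue_inj[OF i A] xe ye by simp
  qed
  have fin: "finite (?F a b)" for a b using finite_symm[OF f] by simp
  have "card (SS (insert i J)) = card ?D" unfolding eq using card_image[OF inj] .
  also have "\<dots> = (\<Sum>a\<in>UNIV. card (SIGMA b:E J. ?F a b))"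
    by (rule card_SigmaI) (auto simp: finite_E[OF f] fin bit_UNIV)
  also have "\<dots> = (\<Sum>a\<in>UNIV. \<Sum>b\<in>E J. card (?F a b))"
    by (intro sum.cong refl card_SigmaI) (auto simp: finite_E[OF f] fin)
  finally show ?thesis .
qed


lemma rec_step:
  assumes f: "finite J" and i: "i \<notin> J"
    and H: "\<And>K. K \<subseteq> J \<Longrightarrow> card K + 1 = card J \<Longrightarrow> card (SS K) = g"
  shows "card (SS (insert i J)) = 2 ^ card J * card (SS J) + (2 ^ card J - 1) * (2 * 2 ^ (card J - 1) * g)"
proof -
  let ?F = "\<lambda>a b. card {C \<in> symm J. nsg (insert i J) (glue i a b C)}"
  have z: "(\<lambda>_. 0) \<in> E J" unfolding E_def by simp
  have S1: "(\<Sum>b\<in>E J. ?F 1 b) = 2 ^ card J * card (SS J)"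
  proof -
    have "(\<Sum>b\<in>E J. ?F 1 b) = (\<Sum>b\<in>E J. card (SS J))"
      using count1[OF f i] by (intro sum.cong) auto
    then show ?thesis using card_E[OF f] by simp
  qed
  have F0z: "?F 0 (\<lambda>_. 0) = 0"
    using nsg_glue0_zero[OF f i, of "\<lambda>_. 0"] by simp
  have F0: "?F 0 b = 2 * 2 ^ (card J - 1) * g" if b: "b \<in> E J - {\<lambda>_. 0}" for b
  proof -
    have "\<not> (\<forall>j. b j = 0)" using b by (auto simp: fun_eq_iff)
    then obtain j where bj: "b j \<noteq> 0" by blast
    then have jJ: "j \<in> J" using b unfolding E_def by auto
    have bj1: "b j = 1" using bj by simp
    define K where "K = J - {j}"
    have JK: "J = insert j K" "j \<notin> K" unfolding K_def using jJ by auto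
    have fK: "finite K" using f unfolding K_def by simp
    have "card J > 0" using f jJ card_gt_0_iff by blast
    then have cK: "card K + 1 = card J" using f jJ unfolding K_def by (simp add: card_Diff_singleton)
    have b': "b(j := 0) \<in> E K" using b unfolding E_def K_def by auto
    have bb: "(b(j := 0))(j := 1) = b" using bj1 by auto
    have iK: "i \<notin> insert j K" using i JK by simp
    have "?F 0 b = 2 * 2 ^ card K * card (SS K)"
      using count0[OF fK iK JK(2) b'] unfolding bb JK(1)[symmetric] .
    also have "card (SS K) = g" using H[OF _ cK] unfolding K_def by auto
    moreover have "card K = card J - 1" using cK by simp
    ultimately show ?thesis by simp
  qed
  have S0: "(\<Sum>b\<in>E J. ?F 0 b) = (2 ^ card J - 1) * (2 * 2 ^ (card J - 1) * g)"
  proof -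
    have "(\<Sum>b\<in>E J. ?F 0 b) = ?F 0 (\<lambda>_. 0) + (\<Sum>b\<in>E J - {\<lambda>_. 0}. ?F 0 b)"
      using sum.remove[OF finite_E[OF f] z] .
    also have "(\<Sum>b\<in>E J - {\<lambda>_. 0}. ?F 0 b) = (\<Sum>b\<in>E J - {\<lambda>_. 0}. 2 * 2 ^ (card J - 1) * g)"
      using F0 by (intro sum.cong) auto
    also have "\<dots> = card (E J - {\<lambda>_. 0}) * (2 * 2 ^ (card J - 1) * g)" by simp
    also have "card (E J - {\<lambda>_. 0}) = 2 ^ card J - 1" using card_E[OF f] z finite_E[OF f] by simp
    finally show ?thesis using F0z by simp
  qed
  have "card (SS (insert i J)) = (\<Sum>a\<in>{0,1}. \<Sum>b\<in>E J. ?F a b)"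
    using card_SS_insert[OF f i] by (simp add: bit_UNIV)
  also have "\<dots> = (\<Sum>b\<in>E J. ?F 0 b) + (\<Sum>b\<in>E J. ?F 1 b)" by simp
  finally show ?thesis using S0 S1 by simp
qed

fun ff :: "nat \<Rightarrow> nat" where
  "ff 0 = 1"
| "ff (Suc 0) = 1"
| "ff (Suc (Suc n)) = 2 ^ Suc n * ff (Suc n) + (2 ^ Suc n - 1) * (2 * 2 ^ n * ff n)"

lemma SS_empty: "SS {} = {\<lambda>x y. 0}"
  unfolding SS_def symm_def nsg_def by (auto simp: fun_eq_iff)

lemma card_SS: "finite I \<Longrightarrow> card (SS I) = ff (card I)"
proof (induction "card I" arbitrary: I rule: less_induct)
  case less
  show ?case
  proof (cases "I = {}")
    case True then show ?thesis by (simp add: SS_empty)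
  next
    case False
    then obtain i where iI: "i \<in> I" by auto
    define J where "J = I - {i}"
    have IJ: "I = insert i J" "i \<notin> J" unfolding J_def using iI by auto
    have fJ: "finite J" using less.prems unfolding J_def by simp
    have cI: "card I = Suc (card J)" using IJ fJ by simp
    have SJ: "card (SS J) = ff (card J)" using less.hyps[of J] fJ cI by simp
    have H: "card (SS K) = ff (card J - 1)" if "K \<subseteq> J" "card K + 1 = card J" for K
    proof -
      have "finite K" using that(1) fJ finite_subset by blast
      moreover have "card K = card J - 1" using that(2) by simp
      ultimately show ?thesis using less.hyps[of K] cI by simp
    qed
    have "card (SS I) = 2 ^ card J * card (SS J) + (2 ^ card J - 1) * (2 * 2 ^ (card J - 1) * ff (card J - 1))"
      unfolding IJ(1) using rec_step[OF fJ IJ(2) H] by blast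
    also have "\<dots> = ff (card I)"
    proof (cases "card J")
      case 0 then show ?thesis using cI SJ by simp
    next
      case (Suc m) then show ?thesis using cI SJ by simp
    qed
    finally show ?thesis .
  qed
qed


definition hh :: "nat \<Rightarrow> real" where "hh k = (if odd k then 2 ^ k - 1 else 2 ^ k)"

lemma ff_real_rec: "real (ff (Suc (Suc n))) = 2 ^ Suc n * real (ff (Suc n)) + (2 ^ Suc n - 1) * (2 ^ Suc n * real (ff n))"
proof -
  have "(1::nat) \<le> 2 ^ Suc n" by simp
  then have "real (2 ^ Suc n - 1 :: nat) = 2 ^ Suc n - 1" by (simp add: of_nat_diff)
  then show ?thesis by simp
qed

lemma ff_step: "real (ff (Suc n)) = hh (Suc n) * real (ff n)"
proof (induction n)
  case 0 then show ?case by (simp add: hh_def)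
next
  case (Suc n)
  show ?case
  proof (cases "odd (Suc n)")
    case True
    have A: "real (ff (Suc n)) = (2 ^ Suc n - 1) * real (ff n)" using Suc True by (simp add: hh_def)
    have "real (ff (Suc (Suc n))) = 2 ^ Suc (Suc n) * real (ff (Suc n))"
      unfolding ff_real_rec A by (simp add: algebra_simps)
    then show ?thesis using True by (simp add: hh_def)
  next
    case False
    have A: "real (ff (Suc n)) = 2 ^ Suc n * real (ff n)" using Suc False by (simp add: hh_def)
    have "real (ff (Suc (Suc n))) = (2 ^ Suc (Suc n) - 1) * real (ff (Suc n))"
      unfolding ff_real_rec A by (simp add: algebra_simps)
    then show ?thesis using False by (simp add: hh_def)
  qed
qed

lemma u_step: "u (Suc (Suc n)) * 2 ^ Suc n = hh (Suc n) * u (Suc n)"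
proof (cases "even n")
  case True
  then obtain m where n: "n = 2 * m" by blast
  have d1: "Suc (Suc n) div 2 = Suc m" and d2: "Suc n div 2 = m" using n by simp_all
  have p: "(2::real) powi (1 - 2 * int (Suc m)) = inverse (2 ^ Suc (2 * m))"
  proof -
    have "(2::real) powi (1 - 2 * int (Suc m)) = 2 powi (- int (Suc (2 * m)))"
      by (rule arg_cong[where f="\<lambda>k. (2::real) powi k"]) simp
    also have "\<dots> = inverse (2 ^ Suc (2 * m))" by (simp only: power_int_minus power_int_of_nat)
    finally show ?thesis .
  qed
  have "u (Suc (Suc n)) = (1 - 2 powi (1 - 2 * int (Suc m))) * u (Suc n)"
    unfolding u_def d1 d2 by (simp add: prod.nat_ivl_Suc')
  then have "u (Suc (Suc n)) * 2 ^ Suc n = (2 ^ Suc n - 1) * u (Suc n)"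
    unfolding p n by (simp add: field_simps)
  then show ?thesis using n by (simp add: hh_def)
next
  case False
  then obtain m where n: "n = 2 * m + 1" using oddE by blast
  have "Suc (Suc n) div 2 = Suc n div 2" using n by simp
  then have "u (Suc (Suc n)) = u (Suc n)" unfolding u_def by simp
  then show ?thesis using n by (simp add: hh_def)
qed

lemma ff_closed: "real (ff n) = u (Suc n) * 2 ^ (Suc n choose 2)"
proof (induction n)
  case 0 then show ?case by (simp add: u_def numeral_2_eq_2)
next
  case (Suc n)
  have c: "Suc (Suc n) choose 2 = Suc n + (Suc n choose 2)"
    by (simp add: numeral_2_eq_2)
  have "real (ff (Suc n)) = hh (Suc n) * u (Suc n) * 2 ^ (Suc n choose 2)"
    using ff_step Suc by simp
  also have "\<dots> = u (Suc (Suc n)) * 2 ^ Suc n * 2 ^ (Suc n choose 2)" using u_step by simp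
  also have "\<dots> = u (Suc (Suc n)) * 2 ^ (Suc (Suc n) choose 2)" unfolding c by (simp add: power_add)
  finally show ?case .
qed


context vec_space
begin

lemma rank_le_span:
  assumes A: "A \<in> carrier_mat n nc" and T: "T \<subseteq> carrier_vec n" "finite T"
    and sp: "set (cols A) \<subseteq> span T"
  shows "rank A \<le> card T"
proof -
  obtain S where max: "maximal S (\<lambda>T. T \<subseteq> set (cols A) \<and> lin_indpt T)"
    using maximal_exists[of "(\<lambda>T. T \<subseteq> set (cols A) \<and> lin_indpt T)" "card (set (cols A))" "{}"]
    by (meson List.finite_set card_mono empty_iff empty_subsetI finite_lin_indpt2 rev_finite_subset)
  then have r: "rank A = card S" using rank_card_indpt[OF A] by blast
  have S: "S \<subseteq> set (cols A)" "lin_indpt S" using max unfolding maximal_def by auto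
  have fS: "finite S" using S(1) finite_subset by blast
  have "S \<subseteq> span T" using S(1) sp by blast
  from replacement[OF fS T(2) T(1) S(2) this] have
    "\<exists>C :: 'a vec set. int (card C) \<le> int (card T) - int (card S)" by blast
  then show ?thesis unfolding r by linarith
qed

lemma zero_in_span: "T \<subseteq> carrier_vec n \<Longrightarrow> 0\<^sub>v n \<in> span T"
proof -
  assume "T \<subseteq> carrier_vec n"
  then have "submodule class_ring (span T) V" using span_is_submodule by simp
  then show ?thesis using LinearCombinations.submodule.zero_closed[of class_ring "span T" V] by simp
qed

lemma vsum_in_span:
  assumes T: "T \<subseteq> carrier_vec n" and f: "finite J" and sp: "\<And>j. j \<in> J \<Longrightarrow> v j \<in> span T"
  shows "vec n (\<lambda>i. \<Sum>j\<in>J. v j $ i) \<in> span T"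
  using f sp
proof (induction J rule: finite_induct)
  case empty
  have "vec n (\<lambda>i. \<Sum>j\<in>{}. v j $ i) = 0\<^sub>v n" by auto
  then show ?case using zero_in_span[OF T] by simp
next
  case (insert x J)
  have sub: "submodule class_ring (span T) V" using span_is_submodule T by simp
  have vx: "v x \<in> span T" using insert by simp
  have vxc: "v x \<in> carrier_vec n" using vx span_is_subset2[OF T] by auto
  have rest: "vec n (\<lambda>i. \<Sum>j\<in>J. v j $ i) \<in> span T" using insert by simp
  have "vec n (\<lambda>i. \<Sum>j\<in>insert x J. v j $ i) = v x + vec n (\<lambda>i. \<Sum>j\<in>J. v j $ i)"
    using insert(1,2) vxc by (auto simp: sum.insert)
  then show ?case using LinearCombinations.submodule.m_closed[OF sub vx rest] by simp
qed

end


context vec_space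
begin

lemma rank_le_gen:
  assumes A: "A \<in> carrier_mat n nc" and J: "J \<subseteq> {..<nc}"
    and dep: "\<And>j. j < nc \<Longrightarrow> j \<notin> J \<Longrightarrow> \<exists>L \<subseteq> J. col A j = vec n (\<lambda>i. \<Sum>l\<in>L. A $$ (i, l))"
  shows "rank A \<le> card J"
proof -
  let ?T = "col A ` J"
  have fJ: "finite J" using J finite_subset by blast
  have Tc: "?T \<subseteq> carrier_vec n" using A by auto
  have fT: "finite ?T" using fJ by simp
  have Tsp: "?T \<subseteq> span ?T" using in_own_span[of ?T] Tc by simp
  have "set (cols A) \<subseteq> span ?T"
  proof
    fix v assume "v \<in> set (cols A)"
    then obtain j where j: "j < nc" "v = col A j" using A by (metis carrier_matD(2) cols_length cols_nth in_set_conv_nth)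
    show "v \<in> span ?T"
    proof (cases "j \<in> J")
      case True then show ?thesis using j Tsp by auto
    next
      case False
      then obtain L where L: "L \<subseteq> J" "col A j = vec n (\<lambda>i. \<Sum>l\<in>L. A $$ (i, l))" using dep j(1) by blast
      have fL: "finite L" using L(1) fJ finite_subset by blast
      have "\<And>l. l \<in> L \<Longrightarrow> col A l \<in> span ?T" using L(1) Tsp by blast
      then have "vec n (\<lambda>i. \<Sum>l\<in>L. col A l $ i) \<in> span ?T"
        using vsum_in_span[OF Tc fL, of "col A"] by blast
      moreover have "vec n (\<lambda>i. \<Sum>l\<in>L. col A l $ i) = vec n (\<lambda>i. \<Sum>l\<in>L. A $$ (i, l))"
      proof (rule eq_vecI)
        fix i assume "i < dim_vec (vec n (\<lambda>i. \<Sum>l\<in>L. A $$ (i, l)))"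
        then have i: "i < n" by simp
        have "(\<Sum>l\<in>L. col A l $ i) = (\<Sum>l\<in>L. A $$ (i, l))"
          using L(1) J A i by (intro sum.cong) auto
        then show "vec n (\<lambda>i. \<Sum>l\<in>L. col A l $ i) $ i = vec n (\<lambda>i. \<Sum>l\<in>L. A $$ (i, l)) $ i"
          using i by simp
      qed simp
      ultimately show ?thesis using j L by simp
    qed
  qed
  then have "rank A \<le> card ?T" using rank_le_span[OF A Tc fT] by simp
  also have "\<dots> \<le> card J" using card_image_le[OF fJ] .
  finally show ?thesis .
qed

end

lemma pick_lessThan: "i < n \<Longrightarrow> pick {..<n} i = i"
proof (induction i)
  case 0 then show ?case by (simp add: Least_equality)
next
  case (Suc i)
  then have "pick {..<n} i = i" by simp
  then show ?case using Suc.prems by (simp, intro Least_equality) auto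
qed

definition restr :: "nat \<Rightarrow> bit mat \<Rightarrow> nat \<Rightarrow> nat \<Rightarrow> bit" where
  "restr n A = (\<lambda>i j. if i < n \<and> j < n then A $$ (i, j) else 0)"

lemma rank_le_n:
  fixes A :: "bit mat"
  assumes A: "A \<in> carrier_mat (Suc n) (Suc n)"
    and rs: "\<And>i. i < Suc n \<Longrightarrow> (\<Sum>j<Suc n. A $$ (i, j)) = 0"
  shows "vec_space.rank (Suc n) A \<le> n"
proof -
  let ?one = "vec (Suc n) (\<lambda>_. 1::bit)"
  have "A *\<^sub>v ?one = 0\<^sub>v (Suc n)"
  proof (rule eq_vecI)
    fix i assume "i < dim_vec (0\<^sub>v (Suc n) :: bit vec)"
    then have i: "i < Suc n" by simp
    have "(A *\<^sub>v ?one) $ i = row A i \<bullet> ?one" using A i by simp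
    also have "\<dots> = (\<Sum>j\<in>{0..<Suc n}. row A i $ j * ?one $ j)" unfolding scalar_prod_def by simp
    also have "\<dots> = (\<Sum>j<Suc n. A $$ (i, j))" unfolding atLeast0LessThan
      using A i by (intro sum.cong refl) simp
    finally have "(A *\<^sub>v ?one) $ i = (\<Sum>j<Suc n. A $$ (i, j))" .
    then show "(A *\<^sub>v ?one) $ i = 0\<^sub>v (Suc n) $ i" using rs[OF i] i by simp
  qed (use A in simp)
  moreover have "?one \<noteq> 0\<^sub>v (Suc n)"
  proof
    assume "?one = 0\<^sub>v (Suc n)"
    then have "?one $ 0 = 0\<^sub>v (Suc n) $ 0" by simp
    then show False by simp
  qed
  moreover have "?one \<in> carrier_vec (Suc n)" by simp
  ultimately have "\<exists>v. v \<in> carrier_vec (Suc n) \<and> v \<noteq> 0\<^sub>v (Suc n) \<and> A *\<^sub>v v = 0\<^sub>v (Suc n)" by blast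
  then have "det A = 0" by (rule iffD2[OF det_0_iff_vec_prod_zero_field[OF A]])
  then have "vec_space.rank (Suc n) A \<noteq> Suc n" using vec_space.det_rank_iff[OF A] by simp
  moreover have "vec_space.rank (Suc n) A \<le> Suc n" using vec_space.rank_le_nc[OF A] .
  ultimately show ?thesis by simp
qed

lemma rank_ge_n:
  fixes A :: "bit mat"
  assumes A: "A \<in> carrier_mat (Suc n) (Suc n)"
    and N: "nsg {..<n} (restr n A)"
  shows "n \<le> vec_space.rank (Suc n) A"
proof -
  let ?M = "submatrix A {..<n} {..<n}"
  have cn: "{i. i < Suc n \<and> i \<in> {..<n}} = {..<n}" by auto
  have cn': "{i. i < Suc n \<and> i < n} = {..<n}" by auto
  have dM: "?M \<in> carrier_mat n n" using A unfolding carrier_mat_def by (simp add: dim_submatrix cn cn')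
  have Mij: "?M $$ (i, j) = A $$ (i, j)" if "i < n" "j < n" for i j
    using submatrix_index[of i A "{..<n}" j "{..<n}"] that A pick_lessThan[of i n] pick_lessThan[of j n]
    by (simp add: cn cn')
  have "det ?M \<noteq> 0"
  proof
    assume "det ?M = 0"
    then obtain v where v: "v \<in> carrier_vec n" "v \<noteq> 0\<^sub>v n" "?M *\<^sub>v v = 0\<^sub>v n"
      using det_0_iff_vec_prod_zero_field[OF dM] by auto
    define w where "w = (\<lambda>j. if j < n then v $ j else 0)"
    have "\<forall>x\<in>{..<n}. mv (restr n A) {..<n} w x = 0"
    proof
      fix x assume x: "x \<in> {..<n}"
      have "mv (restr n A) {..<n} w x = (?M *\<^sub>v v) $ x"
        unfolding mv_def restr_def w_def using x v(1) dM Mij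
        by (auto simp: scalar_prod_def atLeast0LessThan intro!: sum.cong)
      then show "mv (restr n A) {..<n} w x = 0" using v(3) x by simp
    qed
    then have "\<forall>x\<in>{..<n}. w x = 0" using N unfolding nsg_def by blast
    then have "v = 0\<^sub>v n" using v(1) unfolding w_def by (intro eq_vecI) auto
    then show False using v(2) by simp
  qed
  then have "card {j. j < Suc n \<and> j \<in> {..<n}} \<le> vec_space.rank (Suc n) A"
    using vec_space.rank_gt_minor[OF A] by blast
  then show ?thesis by (simp add: cn cn')
qed


lemma last_col:
  fixes A :: "bit mat"
  assumes rs: "(\<Sum>j<Suc n. A $$ (i, j)) = 0"
  shows "A $$ (i, n) = (\<Sum>l<n. A $$ (i, l))"
proof -
  have "(\<Sum>l<n. A $$ (i, l)) + A $$ (i, n) = 0" using rs by simp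
  then have "(\<Sum>l<n. A $$ (i, l)) = A $$ (i, n)" by (simp only: bit_add_eq_iff)
  then show ?thesis by (rule HOL.sym)
qed

lemma rank_lt_n:
  fixes A :: "bit mat"
  assumes A: "A \<in> carrier_mat (Suc n) (Suc n)"
    and sy: "\<And>i j. i < Suc n \<Longrightarrow> j < Suc n \<Longrightarrow> A $$ (i, j) = A $$ (j, i)"
    and rs: "\<And>i. i < Suc n \<Longrightarrow> (\<Sum>j<Suc n. A $$ (i, j)) = 0"
    and N: "\<not> nsg {..<n} (restr n A)"
  shows "vec_space.rank (Suc n) A < n"
proof -
  obtain w j0 where W0: "\<forall>x\<in>{..<n}. mv (restr n A) {..<n} w x = 0" and j0: "j0 \<in> {..<n}" "w j0 \<noteq> 0"
    using N unfolding nsg_def by blast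
  define W where "W = {j \<in> {..<n}. w j = 1}"
  have j0W: "j0 \<in> W" using j0 unfolding W_def by simp
  have fW: "finite W" "W \<subseteq> {..<n}" unfolding W_def by auto
  have rowW: "(\<Sum>j\<in>W. A $$ (i, j)) = 0" if i: "i < n" for i
  proof -
    have "(\<Sum>j\<in>W. A $$ (i, j)) = (\<Sum>j\<in>{..<n}. if w j = 1 then A $$ (i, j) else 0)"
      unfolding W_def by (rule sum.inter_filter) simp
    also have "\<dots> = mv (restr n A) {..<n} w i"
      unfolding mv_def restr_def using i by (intro sum.cong refl) (auto simp: bit_not_zero_iff)
    also have "\<dots> = 0" using W0 i by simp
    finally show ?thesis .
  qed
  have colW: "(\<Sum>j\<in>W. A $$ (i, j)) = 0" if i: "i < Suc n" for i
  proof (cases "i < n")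
    case True then show ?thesis using rowW by simp
  next
    case False
    then have "i = n" using i by simp
    have "(\<Sum>j\<in>W. A $$ (n, j)) = (\<Sum>j\<in>W. \<Sum>l<n. A $$ (l, j))"
    proof (rule sum.cong[OF refl])
      fix j assume "j \<in> W"
      then have j: "j < n" using fW by auto
      have "A $$ (n, j) = A $$ (j, n)" using sy[of n j] j by simp
      also have "\<dots> = (\<Sum>l<n. A $$ (j, l))" using last_col[OF rs[of j]] j by simp
      also have "\<dots> = (\<Sum>l<n. A $$ (l, j))"
      proof (rule sum.cong[OF refl])
        fix l assume "l \<in> {..<n}" then show "A $$ (j, l) = A $$ (l, j)" using sy[of j l] j by simp
      qed
      finally show "A $$ (n, j) = (\<Sum>l<n. A $$ (l, j))" .
    qed
    also have "\<dots> = (\<Sum>l<n. \<Sum>j\<in>W. A $$ (l, j))" by (rule sum.swap)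
    also have "\<dots> = 0" using rowW by simp
    finally show ?thesis using \<open>i = n\<close> by simp
  qed
  define J where "J = {..<n} - {j0}"
  have J: "J \<subseteq> {..<Suc n}" unfolding J_def by auto
  have dep: "\<exists>L \<subseteq> J. col A j = vec (Suc n) (\<lambda>i. \<Sum>l\<in>L. A $$ (i, l))" if j: "j < Suc n" "j \<notin> J" for j
  proof -
    have "j = j0 \<or> j = n" using j j0 unfolding J_def by auto
    then show ?thesis
    proof
      assume jj: "j = j0"
      have "col A j = vec (Suc n) (\<lambda>i. \<Sum>l\<in>W - {j0}. A $$ (i, l))"
      proof (rule eq_vecI)
        fix i assume "i < dim_vec (vec (Suc n) (\<lambda>i. \<Sum>l\<in>W - {j0}. A $$ (i, l)))"
        then have i: "i < Suc n" by simp
        have "A $$ (i, j0) + (\<Sum>l\<in>W - {j0}. A $$ (i, l)) = 0"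
          using colW[OF i] sum.remove[OF fW(1) j0W, of "\<lambda>l. A $$ (i, l)"] by simp
        then have "A $$ (i, j0) = (\<Sum>l\<in>W - {j0}. A $$ (i, l))" by (simp only: bit_add_eq_iff)
        then show "col A j $ i = vec (Suc n) (\<lambda>i. \<Sum>l\<in>W - {j0}. A $$ (i, l)) $ i"
          using i A j jj by simp
      qed (use A in simp)
      moreover have "W - {j0} \<subseteq> J" using fW unfolding J_def by auto
      ultimately show ?thesis by blast
    next
      assume jn: "j = n"
      have "col A j = vec (Suc n) (\<lambda>i. \<Sum>l\<in>{..<n} - W. A $$ (i, l))"
      proof (rule eq_vecI)
        fix i assume "i < dim_vec (vec (Suc n) (\<lambda>i. \<Sum>l\<in>{..<n} - W. A $$ (i, l)))"
        then have i: "i < Suc n" by simp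
        have "A $$ (i, n) = (\<Sum>l<n. A $$ (i, l))" using last_col[OF rs[OF i]] .
        also have "\<dots> = (\<Sum>l\<in>{..<n} - W. A $$ (i, l)) + (\<Sum>l\<in>W. A $$ (i, l))"
          by (rule sum.subset_diff[OF fW(2)]) simp
        also have "\<dots> = (\<Sum>l\<in>{..<n} - W. A $$ (i, l))" using colW[OF i] by simp
        finally show "col A j $ i = vec (Suc n) (\<lambda>i. \<Sum>l\<in>{..<n} - W. A $$ (i, l)) $ i"
          using i A j jn by simp
      qed (use A in simp)
      moreover have "{..<n} - W \<subseteq> J" using j0W unfolding J_def by auto
      ultimately show ?thesis by blast
    qed
  qed
  have "vec_space.rank (Suc n) A \<le> card J" using vec_space.rank_le_gen[OF A J dep] by blast
  also have "card J < n" using j0 unfolding J_def by (simp add: card_Diff_singleton)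
  finally show ?thesis .
qed


lemma rank_iff:
  fixes A :: "bit mat"
  assumes A: "A \<in> carrier_mat (Suc n) (Suc n)"
    and sy: "\<forall>i<Suc n. \<forall>j<Suc n. A $$ (i, j) = A $$ (j, i)"
    and rs: "\<forall>i<Suc n. (\<Sum>j<Suc n. A $$ (i, j)) = 0"
  shows "vec_space.rank (Suc n) A = n \<longleftrightarrow> nsg {..<n} (restr n A)"
proof
  assume r: "vec_space.rank (Suc n) A = n"
  show "nsg {..<n} (restr n A)"
  proof (rule ccontr)
    assume N: "\<not> nsg {..<n} (restr n A)"
    have "vec_space.rank (Suc n) A < n"
    proof (rule rank_lt_n[where A=A and n=n])
      show "A \<in> carrier_mat (Suc n) (Suc n)" by (rule A)
    next
      fix i j assume "i < Suc n" "j < Suc n" then show "A $$ (i, j) = A $$ (j, i)" using sy by blast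
    next
      fix i assume "i < Suc n" then show "(\<Sum>j<Suc n. A $$ (i, j)) = 0" using rs by blast
    next
      show "\<not> nsg {..<n} (restr n A)" by (rule N)
    qed
    then show False using r by simp
  qed
next
  assume N: "nsg {..<n} (restr n A)"
  have "n \<le> vec_space.rank (Suc n) A" by (rule rank_ge_n[OF A N])
  moreover have "vec_space.rank (Suc n) A \<le> n"
  proof (rule rank_le_n[where A=A and n=n])
    show "A \<in> carrier_mat (Suc n) (Suc n)" by (rule A)
  next
    fix i assume "i < Suc n" then show "(\<Sum>j<Suc n. A $$ (i, j)) = 0" using rs by blast
  qed
  ultimately show "vec_space.rank (Suc n) A = n" by (rule antisym[rotated])
qed

definition ext :: "nat \<Rightarrow> (nat \<Rightarrow> nat \<Rightarrow> bit) \<Rightarrow> bit mat" where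
  "ext n S = mat (Suc n) (Suc n) (\<lambda>(i, j). if i < n \<and> j < n then S i j
      else if i < n then (\<Sum>l<n. S i l) else if j < n then (\<Sum>l<n. S j l) else (\<Sum>l<n. \<Sum>m<n. S l m))"

lemma sym_of_transpose:
  fixes A :: "bit mat"
  assumes A: "A \<in> carrier_mat (Suc n) (Suc n)" and t: "transpose_mat A = A"
    and i: "i < Suc n" and j: "j < Suc n"
  shows "A $$ (i, j) = A $$ (j, i)"
proof -
  have "A $$ (i, j) = transpose_mat A $$ (i, j)" using t by simp
  also have "\<dots> = A $$ (j, i)" using A i j by simp
  finally show ?thesis .
qed

lemma restr_ext:
  assumes S: "S \<in> symm {..<n}"
  shows "restr n (ext n S) = S"
proof (intro ext)
  fix i j
  have s: "S i j = S j i" and z: "\<And>x y. x \<notin> {..<n} \<Longrightarrow> S x y = 0" using S unfolding symm_def by blast+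
  show "restr n (ext n S) i j = S i j"
  proof (cases "i < n \<and> j < n")
    case True then show ?thesis unfolding restr_def ext_def by simp
  next
    case False
    then have "S i j = 0" using z[of i j] z[of j i] s by auto
    then show ?thesis using False unfolding restr_def by auto
  qed
qed

lemma ext_in:
  assumes S: "S \<in> SS {..<n}"
  shows "ext n S \<in> B_set (Suc n)"
proof -
  have Ss: "S \<in> symm {..<n}" and N: "nsg {..<n} S" using S unfolding SS_def by auto
  have s: "\<And>x y. S x y = S y x" using Ss unfolding symm_def by blast
  let ?A = "ext n S"
  have A: "?A \<in> carrier_mat (Suc n) (Suc n)" unfolding ext_def by simp
  have sy: "?A $$ (i, j) = ?A $$ (j, i)" if "i < Suc n" "j < Suc n" for i j
    using that s[of i j] unfolding ext_def by auto
  have t: "transpose_mat ?A = ?A"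
  proof (rule eq_matI)
    fix i j assume "i < dim_row ?A" "j < dim_col ?A"
    then have i: "i < Suc n" and j: "j < Suc n" using A by auto
    have "transpose_mat ?A $$ (i, j) = ?A $$ (j, i)" using A i j by simp
    then show "transpose_mat ?A $$ (i, j) = ?A $$ (i, j)" using sy[OF i j] by simp
  qed (use A in auto)
  have rs: "(\<Sum>j<Suc n. ?A $$ (i, j)) = 0" if i: "i < Suc n" for i
  proof -
    have "(\<Sum>j<Suc n. ?A $$ (i, j)) = (\<Sum>j<n. ?A $$ (i, j)) + ?A $$ (i, n)" by simp
    also have "\<dots> = 0"
    proof (cases "i < n")
      case True
      have "(\<Sum>j<n. ?A $$ (i, j)) = (\<Sum>j<n. S i j)" using True i by (intro sum.cong) (auto simp: ext_def)
      moreover have "?A $$ (i, n) = (\<Sum>l<n. S i l)" using True unfolding ext_def by simp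
      ultimately show ?thesis by simp
    next
      case False
      then have inn: "i = n" using i by simp
      have "(\<Sum>j<n. ?A $$ (i, j)) = (\<Sum>j<n. \<Sum>l<n. S j l)" using inn by (intro sum.cong) (auto simp: ext_def)
      moreover have "?A $$ (i, n) = (\<Sum>l<n. \<Sum>m<n. S l m)" using inn unfolding ext_def by simp
      ultimately show ?thesis by simp
    qed
    finally show ?thesis .
  qed
  have sy': "\<forall>i<Suc n. \<forall>j<Suc n. ?A $$ (i, j) = ?A $$ (j, i)" using sy by blast
  have rs': "\<forall>i<Suc n. (\<Sum>j<Suc n. ?A $$ (i, j)) = 0" using rs by blast
  have "vec_space.rank (Suc n) ?A = n" using rank_iff[OF A sy' rs'] restr_ext[OF Ss] N by simp
  then show ?thesis unfolding B_set_def using A t rs by simp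
qed

lemma restr_in:
  assumes A: "A \<in> B_set (Suc n)"
  shows "restr n A \<in> SS {..<n} \<and> ext n (restr n A) = A"
proof -
  have Ac: "A \<in> carrier_mat (Suc n) (Suc n)" and t: "transpose_mat A = A"
    and r: "vec_space.rank (Suc n) A = n" and rs: "\<And>i. i < Suc n \<Longrightarrow> (\<Sum>j<Suc n. A $$ (i, j)) = 0"
    using A unfolding B_set_def by auto
  have sy: "\<And>i j. i < Suc n \<Longrightarrow> j < Suc n \<Longrightarrow> A $$ (i, j) = A $$ (j, i)"
    using sym_of_transpose[OF Ac t] .
  have sy': "\<forall>i<Suc n. \<forall>j<Suc n. A $$ (i, j) = A $$ (j, i)" using sy by blast
  have rs': "\<forall>i<Suc n. (\<Sum>j<Suc n. A $$ (i, j)) = 0" using rs by blast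
  have N: "nsg {..<n} (restr n A)" using rank_iff[OF Ac sy' rs'] r by simp
  have Sy: "restr n A \<in> symm {..<n}" unfolding symm_def
  proof (intro CollectI conjI allI impI)
    fix x y show "restr n A x y = restr n A y x"
    proof (cases "x < n \<and> y < n")
      case True then show ?thesis unfolding restr_def using sy[of x y] by simp
    next
      case False then show ?thesis unfolding restr_def by auto
    qed
  next
    fix x y assume "x \<notin> {..<n}" then show "restr n A x y = 0" unfolding restr_def by simp
  qed
  have lc: "A $$ (i, n) = (\<Sum>l<n. A $$ (i, l))" if "i < Suc n" for i using last_col[OF rs[OF that]] .
  have E: "ext n (restr n A) = A"
  proof (rule eq_matI)
    fix i j assume "i < dim_row A" "j < dim_col A"
    then have i: "i < Suc n" and j: "j < Suc n" using Ac by auto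
    have rl: "(\<Sum>l<n. restr n A x l) = (\<Sum>l<n. A $$ (x, l))" if "x < n" for x
      unfolding restr_def using that by (intro sum.cong) auto
    show "ext n (restr n A) $$ (i, j) = A $$ (i, j)"
    proof (cases "i < n")
      case True
      show ?thesis
      proof (cases "j < n")
        case True2: True
        then show ?thesis using True i j unfolding ext_def restr_def by simp
      next
        case False
        then have "j = n" using j by simp
        then show ?thesis using True i j lc[OF i] rl[OF True] unfolding ext_def by simp
      qed
    next
      case False
      then have inn: "i = n" using i by simp
      show ?thesis
      proof (cases "j < n")
        case True
        have "A $$ (i, j) = A $$ (j, n)" using sy[OF i j] inn by simp
        also have "\<dots> = (\<Sum>l<n. A $$ (j, l))" using lc[of j] True by simp
        finally show ?thesis using True inn rl[OF True] unfolding ext_def by simp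
      next
        case False
        then have jn: "j = n" using j by simp
        have "(\<Sum>l<n. \<Sum>m<n. restr n A l m) = (\<Sum>l<n. A $$ (l, n))"
        proof (rule sum.cong[OF refl])
          fix l assume l: "l \<in> {..<n}"
          then show "(\<Sum>m<n. restr n A l m) = A $$ (l, n)" using rl[of l] lc[of l] by simp
        qed
        also have "\<dots> = (\<Sum>l<n. A $$ (n, l))"
        proof (rule sum.cong[OF refl])
          fix l assume l: "l \<in> {..<n}"
          then show "A $$ (l, n) = A $$ (n, l)" using sy[of l n] by simp
        qed
        also have "\<dots> = A $$ (n, n)" using lc[of n] by simp
        finally show ?thesis using inn jn unfolding ext_def by simp
      qed
    qed
  qed (use Ac in \<open>simp_all add: ext_def\<close>)
  show ?thesis using N Sy E unfolding SS_def by simp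
qed

lemma card_B: "card (B_set (Suc n)) = ff n"
proof -
  have eq: "B_set (Suc n) = ext n ` SS {..<n}"
  proof
    show "B_set (Suc n) \<subseteq> ext n ` SS {..<n}"
    proof
      fix A assume "A \<in> B_set (Suc n)"
      then have "restr n A \<in> SS {..<n}" "A = ext n (restr n A)" using restr_in by auto
      then show "A \<in> ext n ` SS {..<n}" by blast
    qed
  next
    show "ext n ` SS {..<n} \<subseteq> B_set (Suc n)" using ext_in by blast
  qed
  have inj: "inj_on (ext n) (SS {..<n})"
  proof (rule inj_onI)
    fix S S' assume a: "S \<in> SS {..<n}" "S' \<in> SS {..<n}" and e: "ext n S = ext n S'"
    have "S \<in> symm {..<n}" "S' \<in> symm {..<n}" using a unfolding SS_def by auto
    then have "S = restr n (ext n S)" "S' = restr n (ext n S')" using restr_ext by metis+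
    then show "S = S'" using e by simp
  qed
  have "card (B_set (Suc n)) = card (SS {..<n})" unfolding eq using card_image[OF inj] .
  also have "\<dots> = ff n" using card_SS[of "{..<n}"] by simp
  finally show ?thesis .
qed

theorem mainTheorem7:
  fixes k :: nat
  assumes "k \<ge> 1"
  shows "real (card (B_set k)) = u k * 2 ^ (k choose 2)"
proof -
  obtain n where k: "k = Suc n" using assms by (cases k) auto
  show ?thesis unfolding k card_B using ff_closed by simp
qed


end
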